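(* Let $\eta\in[0,1)$ and $\gamma>0$. Then every optimal solution of the free-payment control problem and every optimal solution of the pro-rata control problem (both described in the context) has the following properties, where $P^*(t)$, $u^*(t)$ denote the optimal payment matrices and control inputs (in the pro-rata case $P^*(t)=\mathrm{diag}(p^*(t))A$), $p^*(t)=P^*(t)\mathbf{1}$, and $\bar P^*(t)$, $\bar p^*(t)=\bar P^*(t)\mathbf{1}$, $c^*(t)=e(t)+u^*(t)$, $w^*(t)$, $B^*(t)$ are the associated sequences: 1. (Absolute debt priority rule) For all $i=1,\ldots,n$ and $t\in\{0,\ldots,T-1\}$, $$p^*_i(t)=\min\Big(\bar p_i^*(t),\; w_i^*(t)+c^*_i(t)+\sum\nolimits_{j\ne i}p_{ji}^*(t)\Big).$$ 2. (Injected liquidity is used immediately) If $u_i^*(t)>0$, then $w_i^*(t+1)=0$ and, moreover, $w_i^*(s)=0$ for all $s\leq t$. 3. If $B^*(t_* )<F(t_* )$ at some period $t_*<T-1$, then no liquidity is injected after period $t_*$: $u^*(t)=0$ for all $t>t_*$.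
   Context: Consider $n$ banks (plus a fictitious external node with zero liabilities) over discrete periods $t\in\mathcal T=\{0,\ldots,T-1\}$. $\bar P\in\mathbb R^{n\times n}$, $\bar P\geq 0$ with zero diagonal, is the initial nominal liability matrix ($\bar p_{ij}$ = amount due from $i$ to $j$), $\bar p=\bar P\mathbf{1}$, where $\mathbf 1$ is the all-ones vector. At each $t$, nodes receive external cash $e(t)\geq 0$ (given) and control injections $u(t)\geq 0$; $c(t)=e(t)+u(t)$, and $C(t)=\sum_{k=0}^t c(k)$. $P(t)\in\mathbb R^{n\times n}$ is the actual payment matrix at $t$, $p(t)=P(t)\mathbf 1$. Net worth evolves as $w(0)=0$, $w(t+1)=w(t)+c(t)+P(t)^\top\mathbf 1-P(t)\mathbf 1$, and nominal liabilities as $\bar P(0)=\bar P$, $\bar P(t+1)=\alpha(\bar P(t)-P(t))$ with interest factor $\alpha\geq 1$; $\bar p(t)=\bar P(t)\mathbf 1$. The cumulative injected cash is $B(t)=\sum_{\tau=0}^t\mathbf 1^\top u(\tau)$, and $F(t)\geq 0$ is a given nondecreasing budget sequence. The total loss is $L([P])=\sum_{t=0}^{T-1}\mathbf 1^\top(\bar P(t)-P(t))\mathbf 1$ and the cost is $J([P],[u])=(1-\eta)L([P])+\eta\,\mathbf 1^\top\bar P(T)\mathbf 1+\gamma B(T-1)$ with $\eta\in[0,1]$, $\gamma\geq 0$. The free-payment control problem is: minimize $J([P],[u])$ over sequences $[P]=(P(0),\ldots,P(T-1))$, $[u]=(u(0),\ldots,u(T-1))$ subject to $P(t)\geq 0$,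 $u(t)\geq 0$, $\sum_{k=0}^t\alpha^{t-k}P(k)\leq\alpha^t\bar P$, $C(t)+\sum_{k=0}^t(P(k)^\top-P(k))\mathbf 1\geq 0$, and $B(t)\leq F(t)$ for all $t\in\mathcal T$. The pro-rata control problem additionally imposes $P(t)=\mathrm{diag}(p(t))A$, where $A=[a_{ij}]$ with $a_{ij}=\bar p_{ij}/\bar p_i$ if $\bar p_i>0$, $a_{ii}=1$ if $\bar p_i=0$, and $a_{ij}=0$ otherwise; it is stated in terms of vectors $p(t)$: minimize $(1-\eta)L([p])+\eta\,\mathbf 1^\top\bar p(T)+\gamma B(T-1)$ with $L([p])=\sum_t\mathbf 1^\top(\bar p(t)-p(t))$, subject to $p(t)\geq 0$, $u(t)\geq 0$, $\sum_{k=0}^t\alpha^{t-k}p(k)\leq\alpha^t\bar p$, $C(t)+\sum_{k=0}^t(A^\top p(k)-p(k))\geq 0$, $B(t)\leq F(t)$ for all $t\in\mathcal T$. *)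

theory Defs
  imports Complex_Main
begin

text \<open>Nodes are the elements of a finite type 'n (banks, possibly including the
fictitious external node, which is simply a node with zero nominal liabilities).\<close>

definition cvec :: "(nat \<Rightarrow> 'n \<Rightarrow> real) \<Rightarrow> (nat \<Rightarrow> 'n \<Rightarrow> real) \<Rightarrow> nat \<Rightarrow> 'n \<Rightarrow> real" where
  "cvec e u t i = e t i + u t i"

definition Cum :: "(nat \<Rightarrow> 'n \<Rightarrow> real) \<Rightarrow> (nat \<Rightarrow> 'n \<Rightarrow> real) \<Rightarrow> nat \<Rightarrow> 'n \<Rightarrow> real" where
  "Cum e u t i = (\<Sum>k\<le>t. cvec e u k i)"

fun wseq :: "(nat \<Rightarrow> 'n \<Rightarrow> real) \<Rightarrow> (nat \<Rightarrow> 'n \<Rightarrow> 'n \<Rightarrow> real) \<Rightarrow> nat \<Rightarrow> 'n::finite \<Rightarrow> real" where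
  "wseq c P 0 i = 0"
| "wseq c P (Suc t) i = wseq c P t i + c t i + (\<Sum>j\<in>UNIV. P t j i) - (\<Sum>j\<in>UNIV. P t i j)"

fun Pbar_seq :: "real \<Rightarrow> ('n \<Rightarrow> 'n \<Rightarrow> real) \<Rightarrow> (nat \<Rightarrow> 'n \<Rightarrow> 'n \<Rightarrow> real) \<Rightarrow> nat \<Rightarrow> 'n \<Rightarrow> 'n \<Rightarrow> real" where
  "Pbar_seq \<alpha> Pb P 0 = Pb"
| "Pbar_seq \<alpha> Pb P (Suc t) = (\<lambda>i j. \<alpha> * (Pbar_seq \<alpha> Pb P t i j - P t i j))"

fun pbar_seq :: "real \<Rightarrow> ('n \<Rightarrow> real) \<Rightarrow> (nat \<Rightarrow> 'n \<Rightarrow> real) \<Rightarrow> nat \<Rightarrow> 'n \<Rightarrow> real" where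
  "pbar_seq \<alpha> pb p 0 = pb"
| "pbar_seq \<alpha> pb p (Suc t) = (\<lambda>i. \<alpha> * (pbar_seq \<alpha> pb p t i - p t i))"

definition rowsum :: "('n::finite \<Rightarrow> 'n \<Rightarrow> real) \<Rightarrow> 'n \<Rightarrow> real" where
  "rowsum M i = (\<Sum>j\<in>UNIV. M i j)"

definition Bcum :: "(nat \<Rightarrow> 'n::finite \<Rightarrow> real) \<Rightarrow> nat \<Rightarrow> real" where
  "Bcum u t = (\<Sum>\<tau>\<le>t. \<Sum>i\<in>UNIV. u \<tau> i)"

definition prorata_A :: "('n::finite \<Rightarrow> 'n \<Rightarrow> real) \<Rightarrow> 'n \<Rightarrow> 'n \<Rightarrow> real" where
  "prorata_A Pb i j =
     (if rowsum Pb i > 0 then Pb i j / rowsum Pb i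
      else if rowsum Pb i = 0 \<and> i = j then 1 else 0)"

definition free_feasible ::
  "real \<Rightarrow> ('n::finite \<Rightarrow> 'n \<Rightarrow> real) \<Rightarrow> (nat \<Rightarrow> 'n \<Rightarrow> real) \<Rightarrow> (nat \<Rightarrow> real) \<Rightarrow> nat
   \<Rightarrow> (nat \<Rightarrow> 'n \<Rightarrow> 'n \<Rightarrow> real) \<Rightarrow> (nat \<Rightarrow> 'n \<Rightarrow> real) \<Rightarrow> bool" where
  "free_feasible \<alpha> Pb e F T P u \<longleftrightarrow>
     (\<forall>t<T.
        (\<forall>i j. P t i j \<ge> 0) \<and> (\<forall>i. u t i \<ge> 0) \<and>
        (\<forall>i j. (\<Sum>k\<le>t. \<alpha> ^ (t - k) * P k i j) \<le> \<alpha> ^ t * Pb i j) \<and>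
        (\<forall>i. Cum e u t i + (\<Sum>k\<le>t. (\<Sum>j\<in>UNIV. P k j i) - (\<Sum>j\<in>UNIV. P k i j)) \<ge> 0) \<and>
        Bcum u t \<le> F t)"

definition free_cost ::
  "real \<Rightarrow> real \<Rightarrow> real \<Rightarrow> ('n::finite \<Rightarrow> 'n \<Rightarrow> real) \<Rightarrow> nat
   \<Rightarrow> (nat \<Rightarrow> 'n \<Rightarrow> 'n \<Rightarrow> real) \<Rightarrow> (nat \<Rightarrow> 'n \<Rightarrow> real) \<Rightarrow> real" where
  "free_cost \<alpha> \<eta> \<gamma> Pb T P u =
     (1 - \<eta>) * (\<Sum>t<T. \<Sum>i\<in>UNIV. \<Sum>j\<in>UNIV. Pbar_seq \<alpha> Pb P t i j - P t i j)
     + \<eta> * (\<Sum>i\<in>UNIV. \<Sum>j\<in>UNIV. Pbar_seq \<alpha> Pb P T i j)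
     + \<gamma> * (\<Sum>\<tau><T. \<Sum>i\<in>UNIV. u \<tau> i)"

definition free_optimal ::
  "real \<Rightarrow> real \<Rightarrow> real \<Rightarrow> ('n::finite \<Rightarrow> 'n \<Rightarrow> real) \<Rightarrow> (nat \<Rightarrow> 'n \<Rightarrow> real) \<Rightarrow> (nat \<Rightarrow> real) \<Rightarrow> nat
   \<Rightarrow> (nat \<Rightarrow> 'n \<Rightarrow> 'n \<Rightarrow> real) \<Rightarrow> (nat \<Rightarrow> 'n \<Rightarrow> real) \<Rightarrow> bool" where
  "free_optimal \<alpha> \<eta> \<gamma> Pb e F T P u \<longleftrightarrow>
     free_feasible \<alpha> Pb e F T P u \<and>
     (\<forall>P' u'. free_feasible \<alpha> Pb e F T P' u' \<longrightarrow>
        free_cost \<alpha> \<eta> \<gamma> Pb T P u \<le> free_cost \<alpha> \<eta> \<gamma> Pb T P' u')"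

definition pr_feasible ::
  "real \<Rightarrow> ('n::finite \<Rightarrow> 'n \<Rightarrow> real) \<Rightarrow> (nat \<Rightarrow> 'n \<Rightarrow> real) \<Rightarrow> (nat \<Rightarrow> real) \<Rightarrow> nat
   \<Rightarrow> (nat \<Rightarrow> 'n \<Rightarrow> real) \<Rightarrow> (nat \<Rightarrow> 'n \<Rightarrow> real) \<Rightarrow> bool" where
  "pr_feasible \<alpha> Pb e F T p u \<longleftrightarrow>
     (\<forall>t<T.
        (\<forall>i. p t i \<ge> 0) \<and> (\<forall>i. u t i \<ge> 0) \<and>
        (\<forall>i. (\<Sum>k\<le>t. \<alpha> ^ (t - k) * p k i) \<le> \<alpha> ^ t * rowsum Pb i) \<and>
        (\<forall>i. Cum e u t i + (\<Sum>k\<le>t. (\<Sum>j\<in>UNIV. prorata_A Pb j i * p k j) - p k i) \<ge> 0) \<and>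
        Bcum u t \<le> F t)"

definition pr_cost ::
  "real \<Rightarrow> real \<Rightarrow> real \<Rightarrow> ('n::finite \<Rightarrow> 'n \<Rightarrow> real) \<Rightarrow> nat
   \<Rightarrow> (nat \<Rightarrow> 'n \<Rightarrow> real) \<Rightarrow> (nat \<Rightarrow> 'n \<Rightarrow> real) \<Rightarrow> real" where
  "pr_cost \<alpha> \<eta> \<gamma> Pb T p u =
     (1 - \<eta>) * (\<Sum>t<T. \<Sum>i\<in>UNIV. pbar_seq \<alpha> (rowsum Pb) p t i - p t i)
     + \<eta> * (\<Sum>i\<in>UNIV. pbar_seq \<alpha> (rowsum Pb) p T i)
     + \<gamma> * (\<Sum>\<tau><T. \<Sum>i\<in>UNIV. u \<tau> i)"

definition pr_optimal ::
  "real \<Rightarrow> real \<Rightarrow> real \<Rightarrow> ('n::finite \<Rightarrow> 'n \<Rightarrow> real) \<Rightarrow> (nat \<Rightarrow> 'n \<Rightarrow> real) \<Rightarrow> (nat \<Rightarrow> real) \<Rightarrow> nat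
   \<Rightarrow> (nat \<Rightarrow> 'n \<Rightarrow> real) \<Rightarrow> (nat \<Rightarrow> 'n \<Rightarrow> real) \<Rightarrow> bool" where
  "pr_optimal \<alpha> \<eta> \<gamma> Pb e F T p u \<longleftrightarrow>
     pr_feasible \<alpha> Pb e F T p u \<and>
     (\<forall>p' u'. pr_feasible \<alpha> Pb e F T p' u' \<longrightarrow>
        pr_cost \<alpha> \<eta> \<gamma> Pb T p u \<le> pr_cost \<alpha> \<eta> \<gamma> Pb T p' u')"

text \<open>P: payment matrices, pb: nominal liability vectors pbar(t), u: control inputs.\<close>
definition optimal_properties ::
  "(nat \<Rightarrow> 'n::finite \<Rightarrow> real) \<Rightarrow> (nat \<Rightarrow> real) \<Rightarrow> nat
   \<Rightarrow> (nat \<Rightarrow> 'n \<Rightarrow> 'n \<Rightarrow> real) \<Rightarrow> (nat \<Rightarrow> 'n \<Rightarrow> real) \<Rightarrow> (nat \<Rightarrow> 'n \<Rightarrow> real) \<Rightarrow> bool" where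
  "optimal_properties e F T P pb u \<longleftrightarrow>
     (\<forall>i. \<forall>t<T. rowsum (P t) i =
         min (pb t i) (wseq (cvec e u) P t i + cvec e u t i + (\<Sum>j\<in>UNIV - {i}. P t j i))) \<and>
     (\<forall>i. \<forall>t<T. u t i > 0 \<longrightarrow>
         wseq (cvec e u) P (Suc t) i = 0 \<and> (\<forall>s\<le>t. wseq (cvec e u) P s i = 0)) \<and>
     (\<forall>ts. ts < T - 1 \<and> Bcum u ts < F ts \<longrightarrow> (\<forall>t. ts < t \<and> t < T \<longrightarrow> (\<forall>i. u t i = 0)))"

end

theory Submission
  imports Defs
begin


locale gen =
  fixes \<alpha> \<eta> \<gamma> :: real
    and own :: "'y::finite \<Rightarrow> 'n::finite"
    and rcv :: "'y \<Rightarrow> 'n \<Rightarrow> real"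
    and cap :: "'y \<Rightarrow> real"
    and e :: "nat \<Rightarrow> 'n \<Rightarrow> real"
    and F :: "nat \<Rightarrow> real"
    and T :: nat
  assumes eta0: "0 \<le> \<eta>" and eta1: "\<eta> < 1" and gam: "\<gamma> > 0" and alph: "\<alpha> \<ge> 1"
    and rcv_nn: "\<And>y v. rcv y v \<ge> 0"
    and e_nn: "\<And>t v. t < T \<Longrightarrow> e t v \<ge> 0"
    and F_mono: "\<And>s t. s \<le> t \<Longrightarrow> t < T \<Longrightarrow> F s \<le> F t"
begin

definition out :: "(nat \<Rightarrow> 'y \<Rightarrow> real) \<Rightarrow> nat \<Rightarrow> 'n \<Rightarrow> real" where
  "out x t v = (\<Sum>y\<in>{y. own y = v}. x t y)"
definition inn :: "(nat \<Rightarrow> 'y \<Rightarrow> real) \<Rightarrow> nat \<Rightarrow> 'n \<Rightarrow> real" where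
  "inn x t v = (\<Sum>y\<in>UNIV. rcv y v * x t y)"
definition W :: "(nat \<Rightarrow> 'y \<Rightarrow> real) \<Rightarrow> (nat \<Rightarrow> 'n \<Rightarrow> real) \<Rightarrow> nat \<Rightarrow> 'n \<Rightarrow> real" where
  "W x u t v = (\<Sum>k<t. cvec e u k v + inn x k v - out x k v)"
definition R :: "(nat \<Rightarrow> 'y \<Rightarrow> real) \<Rightarrow> nat \<Rightarrow> 'y \<Rightarrow> real" where
  "R x t y = \<alpha>^t * cap y - (\<Sum>k\<le>t. \<alpha>^(t-k) * x k y)"
definition Xb :: "(nat \<Rightarrow> 'y \<Rightarrow> real) \<Rightarrow> nat \<Rightarrow> 'y \<Rightarrow> real" where
  "Xb x t y = \<alpha>^t * cap y - (\<Sum>k<t. \<alpha>^(t-k) * x k y)"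
definition RN :: "(nat \<Rightarrow> 'y \<Rightarrow> real) \<Rightarrow> nat \<Rightarrow> 'n \<Rightarrow> real" where
  "RN x t v = (\<Sum>y\<in>{y. own y = v}. R x t y)"
definition pbN :: "(nat \<Rightarrow> 'y \<Rightarrow> real) \<Rightarrow> nat \<Rightarrow> 'n \<Rightarrow> real" where
  "pbN x t v = (\<Sum>y\<in>{y. own y = v}. Xb x t y)"
definition feas :: "(nat \<Rightarrow> 'y \<Rightarrow> real) \<Rightarrow> (nat \<Rightarrow> 'n \<Rightarrow> real) \<Rightarrow> bool" where
  "feas x u \<longleftrightarrow> (\<forall>t<T. (\<forall>y. x t y \<ge> 0) \<and> (\<forall>v. u t v \<ge> 0) \<and> (\<forall>y. R x t y \<ge> 0)
      \<and> (\<forall>v. W x u (Suc t) v \<ge> 0) \<and> Bcum u t \<le> F t)"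
definition cost :: "(nat \<Rightarrow> 'y \<Rightarrow> real) \<Rightarrow> (nat \<Rightarrow> 'n \<Rightarrow> real) \<Rightarrow> real" where
  "cost x u = (1-\<eta>)*(\<Sum>t<T. \<Sum>y\<in>UNIV. R x t y) + \<eta>*(\<Sum>y\<in>UNIV. Xb x T y)
      + \<gamma>*(\<Sum>\<tau><T. \<Sum>v\<in>UNIV. u \<tau> v)"
definition opt :: "(nat \<Rightarrow> 'y \<Rightarrow> real) \<Rightarrow> (nat \<Rightarrow> 'n \<Rightarrow> real) \<Rightarrow> bool" where
  "opt x u \<longleftrightarrow> feas x u \<and> (\<forall>x' u'. feas x' u' \<longrightarrow> cost x u \<le> cost x' u')"

lemma Xb_Suc: "Xb x (Suc t) y = \<alpha> * R x t y"
proof -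
  have "(\<Sum>k<Suc t. \<alpha>^(Suc t-k) * x k y) = \<alpha> * (\<Sum>k\<le>t. \<alpha>^(t-k) * x k y)"
    unfolding lessThan_Suc_atMost sum_distrib_left
    by (rule sum.cong) (auto simp: Suc_diff_le)
  then show ?thesis unfolding Xb_def R_def by (simp add: algebra_simps)
qed

lemma Xb_minus: "Xb x t y - x t y = R x t y"
  unfolding Xb_def R_def by (simp add: lessThan_Suc_atMost[symmetric])

lemma W_0[simp]: "W x u 0 v = 0" unfolding W_def by simp

lemma W_Suc: "W x u (Suc t) v = W x u t v + cvec e u t v + inn x t v - out x t v"
  unfolding W_def by simp

lemma RN_eq: "RN x t v = pbN x t v - out x t v"
  unfolding RN_def pbN_def out_def by (simp add: sum_subtractf Xb_minus[symmetric])

lemma pbN_Suc: "pbN x (Suc t) v = \<alpha> * RN x t v"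
  unfolding RN_def pbN_def by (simp add: Xb_Suc sum_distrib_left)


lemma sum_if_eq: "finite A \<Longrightarrow> (\<Sum>k\<in>A. f k * (if k = a then c else 0)) = (if a \<in> A then f a * c else (0::real))"
proof -
  assume "finite A"
  have "(\<Sum>k\<in>A. f k * (if k = a then c else 0)) = (\<Sum>k\<in>A. if k = a then f a * c else 0)"
    by (rule sum.cong) auto
  also have "\<dots> = (if a \<in> A then f a * c else 0)" using \<open>finite A\<close> by (simp add: sum.delta)
  finally show ?thesis .
qed

lemma sum_if_eq': "finite A \<Longrightarrow> (\<Sum>k\<in>A. (if k = a then c else 0)) = (if a \<in> A then c else (0::real))"
  by (simp add: sum.delta)

definition pertx :: "(nat \<Rightarrow> 'y \<Rightarrow> real) \<Rightarrow> nat \<Rightarrow> real \<Rightarrow> ('y \<Rightarrow> real) \<Rightarrow> nat \<Rightarrow> 'y \<Rightarrow> real" where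
  "pertx x \<tau> \<epsilon> g = (\<lambda>k y. x k y + (if k = \<tau> then \<epsilon> * g y else 0) - (if k = Suc \<tau> then \<alpha>*\<epsilon>*g y else 0))"
definition pertu :: "(nat \<Rightarrow> 'n \<Rightarrow> real) \<Rightarrow> nat \<Rightarrow> 'n \<Rightarrow> real \<Rightarrow> nat \<Rightarrow> 'n \<Rightarrow> real" where
  "pertu u \<tau> i s = (\<lambda>k v. u k v + (if v = i \<and> k = \<tau> then s else 0) - (if v = i \<and> k = Suc \<tau> then s else 0))"
definition ng :: "('y \<Rightarrow> real) \<Rightarrow> 'n \<Rightarrow> real" where
  "ng g v = (\<Sum>y\<in>UNIV. rcv y v * g y) - (\<Sum>y\<in>{y. own y = v}. g y)"

lemma R_pert: "R (pertx x \<tau> \<epsilon> g) t y = R x t y - (if t = \<tau> then \<epsilon> * g y else 0)"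
proof -
  have "(\<Sum>k\<le>t. \<alpha>^(t-k) * pertx x \<tau> \<epsilon> g k y) = (\<Sum>k\<le>t. \<alpha>^(t-k) * x k y)
     + (\<Sum>k\<le>t. \<alpha>^(t-k) * (if k = \<tau> then \<epsilon> * g y else 0))
     - (\<Sum>k\<le>t. \<alpha>^(t-k) * (if k = Suc \<tau> then \<alpha>*\<epsilon>*g y else 0))"
    unfolding pertx_def by (simp add: algebra_simps sum.distrib sum_subtractf)
  also have "\<dots> = (\<Sum>k\<le>t. \<alpha>^(t-k) * x k y) + (if \<tau> \<le> t then \<alpha>^(t-\<tau>) * (\<epsilon> * g y) else 0)
     - (if Suc \<tau> \<le> t then \<alpha>^(t - Suc \<tau>) * (\<alpha>*\<epsilon>*g y) else 0)"
    by (simp add: sum_if_eq)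
  also have "\<dots> = (\<Sum>k\<le>t. \<alpha>^(t-k) * x k y) + (if t = \<tau> then \<epsilon> * g y else 0)"
  proof (cases "Suc \<tau> \<le> t")
    case True
    then have "\<alpha>^(t-\<tau>) = \<alpha> * \<alpha>^(t - Suc \<tau>)"
      by (metis Suc_diff_le diff_Suc_Suc power_Suc)
    then show ?thesis using True by simp
  next
    case False then show ?thesis by auto
  qed
  finally show ?thesis unfolding R_def by simp
qed

lemma Xb_pert:
  assumes "\<tau> < T"
  shows "Xb (pertx x \<tau> \<epsilon> g) T y = Xb x T y - (if Suc \<tau> = T then \<alpha> * \<epsilon> * g y else 0)"
proof -
  have "(\<Sum>k<T. \<alpha>^(T-k) * pertx x \<tau> \<epsilon> g k y) = (\<Sum>k<T. \<alpha>^(T-k) * x k y)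
     + (\<Sum>k<T. \<alpha>^(T-k) * (if k = \<tau> then \<epsilon> * g y else 0))
     - (\<Sum>k<T. \<alpha>^(T-k) * (if k = Suc \<tau> then \<alpha>*\<epsilon>*g y else 0))"
    unfolding pertx_def by (simp add: algebra_simps sum.distrib sum_subtractf)
  also have "\<dots> = (\<Sum>k<T. \<alpha>^(T-k) * x k y) + \<alpha>^(T-\<tau>) * (\<epsilon> * g y)
     - (if Suc \<tau> < T then \<alpha>^(T - Suc \<tau>) * (\<alpha>*\<epsilon>*g y) else 0)"
    using assms by (simp add: sum_if_eq)
  also have "\<dots> = (\<Sum>k<T. \<alpha>^(T-k) * x k y) + (if Suc \<tau> = T then \<alpha> * \<epsilon> * g y else 0)"
  proof (cases "Suc \<tau> < T")
    case True
    then have "\<alpha>^(T-\<tau>) = \<alpha> * \<alpha>^(T - Suc \<tau>)"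
      by (metis Suc_diff_le diff_Suc_Suc power_Suc less_imp_le)
    then show ?thesis using True by simp
  next
    case False
    then have "T = Suc \<tau>" using assms by simp
    then show ?thesis by simp
  qed
  finally show ?thesis unfolding Xb_def by simp
qed

lemma inn_pert: "inn (pertx x \<tau> \<epsilon> g) k v = inn x k v
   + (if k = \<tau> then \<epsilon> * (\<Sum>y\<in>UNIV. rcv y v * g y) else 0)
   - (if k = Suc \<tau> then \<alpha> * \<epsilon> * (\<Sum>y\<in>UNIV. rcv y v * g y) else 0)"
  unfolding inn_def pertx_def
  by (simp add: algebra_simps sum.distrib sum_subtractf sum_distrib_left)

lemma out_pert: "out (pertx x \<tau> \<epsilon> g) k v = out x k v
   + (if k = \<tau> then \<epsilon> * (\<Sum>y\<in>{y. own y = v}. g y) else 0)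
   - (if k = Suc \<tau> then \<alpha> * \<epsilon> * (\<Sum>y\<in>{y. own y = v}. g y) else 0)"
  unfolding out_def pertx_def
  by (simp add: algebra_simps sum.distrib sum_subtractf sum_distrib_left)

lemma W_pert: "W (pertx x \<tau> \<epsilon> g) (pertu u \<tau> i s) r v = W x u r v
   + (if \<tau> < r then (if v = i then s else 0) + \<epsilon> * ng g v else 0)
   + (if Suc \<tau> < r then - (if v = i then s else 0) - \<alpha> * \<epsilon> * ng g v else 0)"
proof -
  define D1 where "D1 = (if v = i then s else 0) + \<epsilon> * ng g v"
  define D2 where "D2 = - (if v = i then s else 0) - \<alpha> * \<epsilon> * ng g v"
  have "cvec e (pertu u \<tau> i s) k v + inn (pertx x \<tau> \<epsilon> g) k v - out (pertx x \<tau> \<epsilon> g) k v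
      = (cvec e u k v + inn x k v - out x k v) + (if k = \<tau> then D1 else 0) + (if k = Suc \<tau> then D2 else 0)"
    for k
    unfolding inn_pert out_pert cvec_def pertu_def D1_def D2_def ng_def
    by (auto simp: algebra_simps)
  then have "W (pertx x \<tau> \<epsilon> g) (pertu u \<tau> i s) r v = W x u r v
      + (\<Sum>k<r. (if k = \<tau> then D1 else 0)) + (\<Sum>k<r. (if k = Suc \<tau> then D2 else 0))"
    unfolding W_def by (simp add: sum.distrib)
  then show ?thesis unfolding D1_def D2_def by (simp add: sum_if_eq')
qed

lemma Bcum_pert: "Bcum (pertu u \<tau> i s) r = Bcum u r + (if \<tau> \<le> r then s else 0) - (if Suc \<tau> \<le> r then s else 0)"
proof -
  have "(\<Sum>v\<in>UNIV. pertu u \<tau> i s k v) = (\<Sum>v\<in>UNIV. u k v) + (if k = \<tau> then s else 0) - (if k = Suc \<tau> then s else 0)" for k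
    unfolding pertu_def by (auto simp: sum.distrib sum_subtractf sum.delta)
  then show ?thesis unfolding Bcum_def by (simp add: sum.distrib sum_subtractf sum_if_eq')
qed

lemma sumu_pert: "(\<Sum>k<T. \<Sum>v\<in>UNIV. pertu u \<tau> i s k v) = (\<Sum>k<T. \<Sum>v\<in>UNIV. u k v) + (if \<tau> < T then s else 0) - (if Suc \<tau> < T then s else 0)"
proof -
  have "(\<Sum>v\<in>UNIV. pertu u \<tau> i s k v) = (\<Sum>v\<in>UNIV. u k v) + (if k = \<tau> then s else 0) - (if k = Suc \<tau> then s else 0)" for k
    unfolding pertu_def by (auto simp: sum.distrib sum_subtractf sum.delta)
  then show ?thesis by (simp add: sum.distrib sum_subtractf sum_if_eq')
qed

lemma sum_own: "(\<Sum>y\<in>UNIV. f y) = (\<Sum>v\<in>UNIV. \<Sum>y\<in>{y. own y = v}. (f y::real))"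
  using sum.group[of "UNIV::'y set" "UNIV::'n set" own f] by simp

lemma ev_small: "0 < c \<Longrightarrow> eventually (\<lambda>\<epsilon>::real. \<epsilon> * a \<le> c) (at_right 0)"
proof -
  assume c: "0 < c"
  have "\<forall>y>0. y < c / (\<bar>a\<bar> + 1) \<longrightarrow> y * a \<le> c"
  proof (intro allI impI)
    fix y :: real assume y: "y > 0" "y < c / (\<bar>a\<bar> + 1)"
    have "y * a \<le> y * \<bar>a\<bar>" using y by (simp add: mult_left_mono)
    also have "\<dots> \<le> y * (\<bar>a\<bar> + 1)" using y by simp
    also have "\<dots> \<le> c" using y by (simp add: pos_less_divide_eq less_imp_le)
    finally show "y * a \<le> c" .
  qed
  moreover have "c / (\<bar>a\<bar> + 1) > 0" using c by simp
  ultimately show ?thesis unfolding eventually_at_right_field by blast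
qed

lemma obtain_eps: "eventually P (at_right (0::real)) \<Longrightarrow> \<exists>\<epsilon>>0. P \<epsilon>"
proof -
  assume "eventually P (at_right (0::real))"
  then obtain b where b: "b > 0" "\<forall>y>0. y < b \<longrightarrow> P y" unfolding eventually_at_right_field by auto
  then show ?thesis by (intro exI[of _ "b/2"]) auto
qed

context
  fixes x u assumes fe: "feas x u"
begin

lemma fx: "t < T \<Longrightarrow> x t y \<ge> 0" using fe unfolding feas_def by auto
lemma fu: "t < T \<Longrightarrow> u t v \<ge> 0" using fe unfolding feas_def by auto
lemma fR: "t < T \<Longrightarrow> R x t y \<ge> 0" using fe unfolding feas_def by auto
lemma fW: "t < T \<Longrightarrow> W x u (Suc t) v \<ge> 0" using fe unfolding feas_def by auto
lemma fB: "t < T \<Longrightarrow> Bcum u t \<le> F t" using fe unfolding feas_def by auto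

lemma fW': "t \<le> T \<Longrightarrow> W x u t v \<ge> 0"
  by (cases t) (auto intro: fW)

lemma fout: "t < T \<Longrightarrow> out x t v \<ge> 0"
  unfolding out_def by (auto intro!: sum_nonneg fx)
lemma finn: "t < T \<Longrightarrow> inn x t v \<ge> 0"
  unfolding inn_def by (auto intro!: sum_nonneg mult_nonneg_nonneg fx rcv_nn)
lemma fc: "t < T \<Longrightarrow> cvec e u t v \<ge> 0"
  unfolding cvec_def using fu e_nn by (simp add: add_nonneg_nonneg)
lemma fRN: "t < T \<Longrightarrow> RN x t v \<ge> 0"
  unfolding RN_def by (auto intro!: sum_nonneg fR)

lemma min_iff:
  assumes "t < T"
  shows "out x t v = min (pbN x t v) (W x u t v + cvec e u t v + inn x t v)
     \<longleftrightarrow> \<not> (RN x t v > 0 \<and> W x u (Suc t) v > 0)"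
  using fRN[OF assms, of v] fW[OF assms, of v] RN_eq[of x t v] W_Suc[of x u t v]
  by (auto simp: min_def)

lemma persist:
  assumes t: "t < T" and z: "RN x t v = 0"
  shows "\<And>r. t < r \<Longrightarrow> r < T \<Longrightarrow> out x r v = 0"
    and "\<And>r. Suc t \<le> r \<Longrightarrow> r \<le> T \<Longrightarrow> W x u (Suc t) v \<le> W x u r v"
proof -
  have R0: "R x t y = 0" if "own y = v" for y
  proof -
    have "(\<Sum>y\<in>{y. own y = v}. R x t y) = 0" using z unfolding RN_def .
    then have "\<forall>y\<in>{y. own y = v}. R x t y = 0"
      by (subst (asm) sum_nonneg_eq_0_iff) (auto intro: fR t)
    then show ?thesis using that by auto
  qed
  have key: "R x (t+d) y = 0 \<and> (0 < d \<longrightarrow> x (t+d) y = 0)" if "own y = v" "t + d < T" for y d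
    using that
  proof (induction d)
    case 0 then show ?case using R0 by simp
  next
    case (Suc d)
    then have IH: "R x (t+d) y = 0" by simp
    have "R x (t + Suc d) y = Xb x (Suc (t+d)) y - x (Suc (t+d)) y"
      using Xb_minus[of x "Suc (t+d)" y] by simp
    also have "\<dots> = - x (Suc (t+d)) y" using IH Xb_Suc[of x "t+d" y] by simp
    finally have e1: "R x (t + Suc d) y = - x (Suc (t+d)) y" .
    have "R x (t + Suc d) y \<ge> 0" using fR Suc.prems by simp
    moreover have "x (t + Suc d) y \<ge> 0" using fx Suc.prems by simp
    ultimately show ?case using e1 by simp
  qed
  show o0: "out x r v = 0" if "t < r" "r < T" for r
  proof -
    obtain d where d: "r = t + d" "0 < d" using \<open>t < r\<close> by (metis less_imp_add_positive)
    show ?thesis unfolding out_def using key[of _ d] d that by (auto intro!: sum.neutral)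
  qed
  show "W x u (Suc t) v \<le> W x u r v" if "Suc t \<le> r" "r \<le> T" for r
    using that
  proof (induction r)
    case 0 then show ?case by simp
  next
    case (Suc r)
    show ?case
    proof (cases "Suc t = Suc r")
      case True then show ?thesis by simp
    next
      case False
      then have "Suc t \<le> r" "r < T" using Suc.prems by auto
      then have "W x u (Suc t) v \<le> W x u r v" using Suc.IH by simp
      moreover have "out x r v = 0" using o0 \<open>Suc t \<le> r\<close> \<open>r < T\<close> by simp
      ultimately show ?thesis using W_Suc[of x u r v] fc[OF \<open>r < T\<close>, of v] finn[OF \<open>r < T\<close>, of v]
        by simp
    qed
  qed
qed


lemma perturb:
  assumes tau: "\<tau> < T" and ep: "\<epsilon> > 0" and s0: "s \<ge> 0"
    and gnn: "\<And>y. g y \<ge> 0" and gpos: "(\<Sum>y\<in>UNIV. g y) > 0"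
    and C1: "\<And>y. \<epsilon> * g y \<le> R x \<tau> y"
    and C2: "\<And>y. Suc \<tau> < T \<Longrightarrow> \<alpha> * \<epsilon> * g y \<le> x (Suc \<tau>) y"
    and C3: "s > 0 \<Longrightarrow> Suc \<tau> < T \<and> s \<le> u (Suc \<tau>) i \<and> Bcum u \<tau> + s \<le> F \<tau>"
    and C4: "\<And>v. 0 \<le> W x u (Suc \<tau>) v + (if v = i then s else 0) + \<epsilon> * ng g v"
    and C5: "\<And>v r. Suc (Suc \<tau>) \<le> r \<Longrightarrow> r \<le> T \<Longrightarrow> 0 \<le> W x u r v - (\<alpha> - 1) * \<epsilon> * ng g v"
  shows "feas (pertx x \<tau> \<epsilon> g) (pertu u \<tau> i s) \<and> cost (pertx x \<tau> \<epsilon> g) (pertu u \<tau> i s) < cost x u"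
proof
  let ?x = "pertx x \<tau> \<epsilon> g" and ?u = "pertu u \<tau> i s"
  show "feas ?x ?u" unfolding feas_def
  proof (intro allI impI conjI)
    fix t y assume t: "t < T"
    show "?x t y \<ge> 0"
      using fx[OF t, of y] gnn[of y] ep C2[of y] t unfolding pertx_def by auto
  next
    fix t v assume t: "t < T"
    show "?u t v \<ge> 0"
      using fu[OF t, of v] s0 C3 unfolding pertu_def by (cases "s > 0") auto
  next
    fix t y assume t: "t < T"
    show "R ?x t y \<ge> 0" unfolding R_pert using fR[OF t, of y] C1[of y] by auto
  next
    fix t v assume t: "t < T"
    show "W ?x ?u (Suc t) v \<ge> 0"
    proof -
      consider "Suc t \<le> \<tau>" | "t = \<tau>" | "Suc \<tau> \<le> t" by linarith
      then show ?thesis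
      proof cases
        case 1 then show ?thesis unfolding W_pert using fW[OF t, of v] by auto
      next
        case 2 then show ?thesis unfolding W_pert using C4[of v] by auto
      next
        case 3
        have "0 \<le> W x u (Suc t) v - (\<alpha> - 1) * \<epsilon> * ng g v" using C5[of "Suc t" v] 3 t by simp
        then show ?thesis unfolding W_pert using 3 by (auto simp: algebra_simps)
      qed
    qed
  next
    fix t assume t: "t < T"
    show "Bcum ?u t \<le> F t"
    proof (cases "t = \<tau> \<and> s > 0")
      case True then show ?thesis unfolding Bcum_pert using C3 by auto
    next
      case False
      then have "Bcum ?u t \<le> Bcum u t" unfolding Bcum_pert using s0 by auto
      then show ?thesis using fB[OF t] by simp
    qed
  qed
  have sR: "(\<Sum>t<T. \<Sum>y\<in>UNIV. R ?x t y) = (\<Sum>t<T. \<Sum>y\<in>UNIV. R x t y) - \<epsilon> * (\<Sum>y\<in>UNIV. g y)"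
  proof -
    have "(\<Sum>t<T. \<Sum>y\<in>UNIV. R ?x t y) = (\<Sum>t<T. (\<Sum>y\<in>UNIV. R x t y) - (if t = \<tau> then \<epsilon> * (\<Sum>y\<in>UNIV. g y) else 0))"
      unfolding R_pert by (rule sum.cong) (auto simp: sum_subtractf sum_distrib_left)
    also have "\<dots> = (\<Sum>t<T. \<Sum>y\<in>UNIV. R x t y) - \<epsilon> * (\<Sum>y\<in>UNIV. g y)"
      using tau by (simp add: sum_subtractf sum_if_eq')
    finally show ?thesis .
  qed
  have sX: "(\<Sum>y\<in>UNIV. Xb ?x T y) = (\<Sum>y\<in>UNIV. Xb x T y) - (if Suc \<tau> = T then \<alpha> * \<epsilon> * (\<Sum>y\<in>UNIV. g y) else 0)"
    unfolding Xb_pert[OF tau] by (auto simp: sum_subtractf sum_distrib_left)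
  have sU: "(\<Sum>k<T. \<Sum>v\<in>UNIV. ?u k v) = (\<Sum>k<T. \<Sum>v\<in>UNIV. u k v)"
    unfolding sumu_pert using tau C3 s0 by (cases "s > 0") auto
  have p1: "(1 - \<eta>) * (\<epsilon> * (\<Sum>y\<in>UNIV. g y)) > 0" using eta1 ep gpos by simp
  have p2: "\<eta> * (if Suc \<tau> = T then \<alpha> * \<epsilon> * (\<Sum>y\<in>UNIV. g y) else 0) \<ge> 0"
    using eta0 alph ep gpos by simp
  show "cost ?x ?u < cost x u"
    unfolding cost_def sR sX sU using p1 p2 by (simp add: algebra_simps)
qed

lemma reduce_u:
  assumes t: "t < T" and s: "0 < s" "s \<le> u t i"
    and W: "\<And>r. Suc t \<le> r \<Longrightarrow> r \<le> T \<Longrightarrow> s \<le> W x u r i"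
  shows "feas x (\<lambda>k v. u k v - (if k = t \<and> v = i then s else 0))
     \<and> cost x (\<lambda>k v. u k v - (if k = t \<and> v = i then s else 0)) < cost x u"
proof
  let ?u = "\<lambda>k v. u k v - (if k = t \<and> v = i then s else 0)"
  have Wu: "W x ?u r v = W x u r v - (if v = i \<and> t < r then s else 0)" for r v
  proof -
    have "W x ?u r v = W x u r v - (\<Sum>k<r. if k = t then (if v = i then s else 0) else 0)"
      unfolding W_def cvec_def sum_subtractf[symmetric] by (rule sum.cong) auto
    then show ?thesis by (simp add: sum_if_eq')
  qed
  have Bu: "Bcum ?u r = Bcum u r - (if t \<le> r then s else 0)" for r
  proof -
    have "(\<Sum>v\<in>UNIV. ?u k v) = (\<Sum>v\<in>UNIV. u k v) - (if k = t then s else 0)" for k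
      by (auto simp: sum_subtractf sum.delta)
    then show ?thesis unfolding Bcum_def by (simp add: sum_subtractf sum_if_eq')
  qed
  show "feas x ?u" unfolding feas_def
  proof (intro allI impI conjI)
    fix k y assume "k < T" then show "x k y \<ge> 0" by (rule fx)
  next
    fix k v assume k: "k < T" show "?u k v \<ge> 0" using fu[OF k, of v] s by auto
  next
    fix k y assume "k < T" then show "R x k y \<ge> 0" by (rule fR)
  next
    fix k v assume k: "k < T"
    show "W x ?u (Suc k) v \<ge> 0" unfolding Wu using fW[OF k, of v] W[of "Suc k"] k by auto
  next
    fix k assume k: "k < T"
    show "Bcum ?u k \<le> F k" unfolding Bu using fB[OF k] s by auto
  qed
  have "(\<Sum>k<T. \<Sum>v\<in>UNIV. ?u k v) = (\<Sum>k<T. \<Sum>v\<in>UNIV. u k v) - s"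
  proof -
    have "(\<Sum>v\<in>UNIV. ?u k v) = (\<Sum>v\<in>UNIV. u k v) - (if k = t then s else 0)" for k
      by (auto simp: sum_subtractf sum.delta)
    then show ?thesis using t by (simp add: sum_subtractf sum_if_eq')
  qed
  then show "cost x ?u < cost x u" unfolding cost_def using gam s by (simp add: algebra_simps)
qed


lemma flow:
  assumes tT: "t < T"
    and p1: "\<And>v. \<not> (RN x t v > 0 \<and> W x u (Suc t) v > 0)"
    and ipos: "out x t i > 0"
    and ialt: "(RN x t i = 0 \<and> W x u (Suc t) i > 0) \<or> inn x t i < out x t i"
  shows "\<exists>g. (\<forall>y. g y \<ge> 0) \<and> (\<Sum>y\<in>UNIV. g y) > 0 \<and> (\<forall>y. g y > 0 \<longrightarrow> x t y > 0)
     \<and> ng g i \<ge> -1 \<and> (\<forall>v. v \<noteq> i \<longrightarrow> ng g v \<ge> 0)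
     \<and> (\<forall>v. ng g v > 0 \<longrightarrow> RN x t v = 0 \<and> W x u (Suc t) v > 0)"
proof -
  define pN where "pN = out x t"
  define fl where "fl v w = (\<Sum>y\<in>{y. own y = v}. x t y * rcv y w)" for v w
  define Z where "Z v \<longleftrightarrow> RN x t v = 0 \<and> W x u (Suc t) v > 0" for v
  define S where "S = {v. pN v > 0 \<and> \<not> Z v \<and> v \<noteq> i}"
  define Ah where "Ah v w = fl v w / pN v" for v w
  define \<Phi> where "\<Phi> H w = (if w \<in> S then Ah i w + (\<Sum>v\<in>S. H v * Ah v w) else 0)" for H :: "'n \<Rightarrow> real" and w
  define Hs where "Hs k = (\<Phi> ^^ k) (\<lambda>_. 0)" for k
  have Hs0: "Hs 0 = (\<lambda>_. 0)" and HsS: "Hs (Suc k) = \<Phi> (Hs k)" for k unfolding Hs_def by simp_all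
  have pi: "pN i > 0" using ipos unfolding pN_def .
  have iS: "i \<notin> S" unfolding S_def by simp
  have pN_nn: "pN v \<ge> 0" for v unfolding pN_def using fout[OF tT] .
  have fl_nn: "fl v w \<ge> 0" for v w unfolding fl_def
    by (auto intro!: sum_nonneg mult_nonneg_nonneg fx[OF tT] rcv_nn)
  have Ah_nn: "Ah v w \<ge> 0" for v w unfolding Ah_def using fl_nn pN_nn by simp
  have inn_fl: "inn x t w = (\<Sum>v\<in>UNIV. fl v w)" for w
    unfolding inn_def fl_def by (subst sum_own) (simp add: mult.commute)
  have sup1: "fl i w + (\<Sum>v\<in>S. fl v w) \<le> inn x t w" for w
  proof -
    have "fl i w + (\<Sum>v\<in>S. fl v w) = (\<Sum>v\<in>insert i S. fl v w)" using iS by simp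
    also have "\<dots> \<le> (\<Sum>v\<in>UNIV. fl v w)" by (rule sum_mono2) (auto simp: fl_nn)
    finally show ?thesis unfolding inn_fl .
  qed
  have innS: "inn x t w \<le> pN w" if "w \<in> S" for w
  proof -
    have "\<not> Z w" using that unfolding S_def by simp
    have "\<not> W x u (Suc t) w > 0"
    proof
      assume "W x u (Suc t) w > 0"
      then have "\<not> RN x t w > 0" using p1 by blast
      then have "RN x t w = 0" using fRN[OF tT, of w] by simp
      then show False using \<open>\<not> Z w\<close> \<open>W x u (Suc t) w > 0\<close> unfolding Z_def by simp
    qed
    then show ?thesis unfolding pN_def using W_Suc[of x u t w] fW'[of t w] tT fc[OF tT, of w] by simp
  qed
  have Hs_nn: "0 \<le> Hs k w" for k w
  proof (induction k arbitrary: w)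
    case 0 then show ?case by (simp add: Hs0)
  next
    case (Suc k) then show ?case unfolding HsS \<Phi>_def
      by (auto intro!: add_nonneg_nonneg sum_nonneg mult_nonneg_nonneg Ah_nn)
  qed
  have Hs_mono: "Hs k w \<le> Hs (Suc k) w" for k w
  proof (induction k arbitrary: w)
    case 0 then show ?case using Hs_nn by (simp add: Hs0)
  next
    case (Suc k)
    have "(\<Sum>v\<in>S. Hs k v * Ah v w) \<le> (\<Sum>v\<in>S. Hs (Suc k) v * Ah v w)"
      by (rule sum_mono) (simp add: Suc.IH Ah_nn mult_right_mono)
    then show ?case unfolding HsS[of "Suc k"] HsS[of k] \<Phi>_def by simp
  qed
  have Hs_out: "Hs k w = 0" if "w \<notin> S" for k w
    using that by (cases k) (auto simp: Hs0 HsS \<Phi>_def)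
  have Hs_bd: "Hs k w \<le> pN w / pN i" for k w
  proof (induction k arbitrary: w)
    case 0 then show ?case using pN_nn pi by (simp add: Hs0)
  next
    case (Suc k)
    show ?case
    proof (cases "w \<in> S")
      case False then show ?thesis using pN_nn pi by (simp add: HsS \<Phi>_def)
    next
      case True
      have "(\<Sum>v\<in>S. Hs k v * Ah v w) \<le> (\<Sum>v\<in>S. fl v w / pN i)"
      proof (rule sum_mono)
        fix v assume v: "v \<in> S"
        then have pv: "pN v > 0" unfolding S_def by simp
        have "Hs k v * Ah v w \<le> (pN v / pN i) * Ah v w"
          by (rule mult_right_mono[OF Suc.IH[of v] Ah_nn[of v w]])
        also have "\<dots> = fl v w / pN i" unfolding Ah_def using pv by simp
        finally show "Hs k v * Ah v w \<le> fl v w / pN i" .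
      qed
      then have "Hs (Suc k) w \<le> fl i w / pN i + (\<Sum>v\<in>S. fl v w) / pN i"
        using True unfolding HsS \<Phi>_def Ah_def by (simp add: sum_divide_distrib)
      also have "\<dots> = (fl i w + (\<Sum>v\<in>S. fl v w)) / pN i" by (simp add: add_divide_distrib)
      also have "\<dots> \<le> pN w / pN i"
        using sup1[of w] innS[OF True] pi by (simp add: divide_right_mono)
      finally show ?thesis .
    qed
  qed
  define H where "H w = (SUP k. Hs k w)" for w
  have conv: "(\<lambda>k. Hs k w) \<longlonglongrightarrow> H w" for w
    unfolding H_def
    by (rule LIMSEQ_incseq_SUP) (auto intro!: incseq_SucI Hs_mono bdd_aboveI2[where M="pN w / pN i"] Hs_bd)
  have H_nn: "0 \<le> H w" for w by (rule LIMSEQ_le_const[OF conv]) (auto simp: Hs_nn)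
  have H_bd: "H w \<le> pN w / pN i" for w by (rule LIMSEQ_le_const2[OF conv]) (auto simp: Hs_bd)
  have H_out: "H w = 0" if "w \<notin> S" for w unfolding H_def using Hs_out[OF that] by simp
  have H_fix: "H w = Ah i w + (\<Sum>v\<in>S. H v * Ah v w)" if "w \<in> S" for w
  proof -
    have "(\<lambda>k. Hs (Suc k) w) \<longlonglongrightarrow> H w" using conv[of w] by (rule LIMSEQ_Suc)
    moreover have "(\<lambda>k. Hs (Suc k) w) = (\<lambda>k. Ah i w + (\<Sum>v\<in>S. Hs k v * Ah v w))"
      using that unfolding HsS \<Phi>_def by simp
    moreover have "(\<lambda>k. Ah i w + (\<Sum>v\<in>S. Hs k v * Ah v w)) \<longlonglongrightarrow> Ah i w + (\<Sum>v\<in>S. H v * Ah v w)"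
      by (intro tendsto_intros conv)
    ultimately show ?thesis using LIMSEQ_unique by metis
  qed
  define h where "h v = (if v = i then 1 else H v)" for v
  have h_nn: "h v \<ge> 0" for v unfolding h_def using H_nn by simp
  have h_zero: "h v = 0" if "pN v = 0" for v
  proof -
    have "v \<noteq> i" using that pi by auto
    moreover have "v \<notin> S" using that unfolding S_def by simp
    ultimately show ?thesis unfolding h_def using H_out by simp
  qed
  define g where "g y = h (own y) * x t y / pN (own y)" for y
  have g_nn: "g y \<ge> 0" for y unfolding g_def using h_nn fx[OF tT] pN_nn by simp
  have out_g: "(\<Sum>y\<in>{y. own y = v}. g y) = h v" for v
  proof -
    have "(\<Sum>y\<in>{y. own y = v}. g y) = (\<Sum>y\<in>{y. own y = v}. (h v / pN v) * x t y)"
      unfolding g_def by (rule sum.cong) auto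
    also have "\<dots> = (h v / pN v) * pN v" unfolding pN_def out_def by (simp add: sum_distrib_left)
    also have "\<dots> = h v" using h_zero[of v] by (cases "pN v = 0") auto
    finally show ?thesis .
  qed
  have inn_g: "(\<Sum>y\<in>UNIV. rcv y w * g y) = (\<Sum>v\<in>UNIV. h v * Ah v w)" for w
  proof -
    have "(\<Sum>y\<in>UNIV. rcv y w * g y) = (\<Sum>v\<in>UNIV. \<Sum>y\<in>{y. own y = v}. rcv y w * g y)" by (rule sum_own)
    also have "\<dots> = (\<Sum>v\<in>UNIV. h v * Ah v w)"
    proof (rule sum.cong)
      fix v
      have "(\<Sum>y\<in>{y. own y = v}. rcv y w * g y) = (\<Sum>y\<in>{y. own y = v}. (h v / pN v) * (x t y * rcv y w))"
        unfolding g_def by (rule sum.cong) auto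
      also have "\<dots> = h v * Ah v w" unfolding Ah_def fl_def
        by (simp add: sum_distrib_left[symmetric] sum_divide_distrib[symmetric])
      finally show "(\<Sum>y\<in>{y. own y = v}. rcv y w * g y) = h v * Ah v w" .
    qed simp
    finally show ?thesis .
  qed
  have split: "(\<Sum>v\<in>UNIV. h v * Ah v w) = Ah i w + (\<Sum>v\<in>S. H v * Ah v w)" for w
  proof -
    have "(\<Sum>v\<in>UNIV. h v * Ah v w) = (\<Sum>v\<in>insert i S. h v * Ah v w)"
      by (rule sum.mono_neutral_right) (auto simp: h_def H_out)
    also have "\<dots> = Ah i w + (\<Sum>v\<in>S. H v * Ah v w)"
      using iS by (simp add: h_def) (rule sum.cong, auto)
    finally show ?thesis .
  qed
  have ngw: "ng g w = Ah i w + (\<Sum>v\<in>S. H v * Ah v w) - h w" for w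
    unfolding ng_def inn_g out_g split ..
  have rest_nn: "0 \<le> Ah i w + (\<Sum>v\<in>S. H v * Ah v w)" for w
    by (auto intro!: add_nonneg_nonneg sum_nonneg mult_nonneg_nonneg Ah_nn H_nn)
  have G2: "(\<Sum>y\<in>UNIV. g y) > 0"
  proof -
    have "(1::real) = (\<Sum>y\<in>{y. own y = i}. g y)" using out_g[of i] by (simp add: h_def)
    also have "\<dots> \<le> (\<Sum>y\<in>UNIV. g y)" by (rule sum_mono2) (auto simp: g_nn)
    finally show "(\<Sum>y\<in>UNIV. g y) > 0" by simp
  qed
  have G3: "x t y > 0" if "g y > 0" for y
    using that fx[OF tT, of y] unfolding g_def by (cases "x t y = 0") auto
  have G4: "ng g i \<ge> -1" unfolding ngw using rest_nn[of i] by (simp add: h_def)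
  have G5: "ng g v \<ge> 0" if "v \<noteq> i" for v
  proof (cases "v \<in> S")
    case True then show ?thesis unfolding ngw using H_fix[OF True] \<open>v \<noteq> i\<close> by (simp add: h_def)
  next
    case False then show ?thesis unfolding ngw using rest_nn[of v] \<open>v \<noteq> i\<close> by (simp add: h_def H_out)
  qed
  have G6: "RN x t v = 0 \<and> W x u (Suc t) v > 0" if ngp: "ng g v > 0" for v
  proof (cases "v = i")
    case True
    have "\<not> inn x t i < out x t i"
    proof
      assume lt: "inn x t i < out x t i"
      have "(\<Sum>u\<in>S. H u * Ah u i) \<le> (\<Sum>u\<in>S. fl u i / pN i)"
      proof (rule sum_mono)
        fix u assume u: "u \<in> S"
        then have pv: "pN u > 0" unfolding S_def by simp
        have "H u * Ah u i \<le> (pN u / pN i) * Ah u i" by (rule mult_right_mono[OF H_bd Ah_nn])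
        also have "\<dots> = fl u i / pN i" unfolding Ah_def using pv by simp
        finally show "H u * Ah u i \<le> fl u i / pN i" .
      qed
      then have "Ah i i + (\<Sum>u\<in>S. H u * Ah u i) \<le> (fl i i + (\<Sum>u\<in>S. fl u i)) / pN i"
        unfolding Ah_def by (simp add: sum_divide_distrib add_divide_distrib)
      also have "\<dots> \<le> inn x t i / pN i" using sup1[of i] pi by (simp add: divide_right_mono)
      also have "\<dots> < 1" using lt pi unfolding pN_def by simp
      finally have "ng g i < 0" unfolding ngw by (simp add: h_def)
      then show False using ngp True by simp
    qed
    then show ?thesis using ialt True by simp
  next
    case False
    have vS: "v \<notin> S" using ngp H_fix False unfolding ngw by (auto simp: h_def)
    have ngv: "ng g v = Ah i v + (\<Sum>u\<in>S. H u * Ah u v)" unfolding ngw using False vS by (simp add: h_def H_out)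
    have innp: "inn x t v > 0"
    proof (rule ccontr)
      assume "\<not> inn x t v > 0"
      then have "inn x t v = 0" using finn[OF tT, of v] by simp
      then have "(\<Sum>u\<in>UNIV. fl u v) = 0" unfolding inn_fl .
      then have "\<forall>u\<in>UNIV. fl u v = 0" by (subst (asm) sum_nonneg_eq_0_iff) (auto simp: fl_nn)
      then have "ng g v = 0" unfolding ngv Ah_def by simp
      then show False using ngp by simp
    qed
    show ?thesis
    proof (cases "Z v")
      case True then show ?thesis unfolding Z_def .
    next
      case nz: False
      then have "pN v = 0" using vS False pN_nn[of v] unfolding S_def by auto
      then have Wp: "W x u (Suc t) v > 0"
        using W_Suc[of x u t v] fW'[of t v] tT fc[OF tT, of v] innp unfolding pN_def by simp
      then have "\<not> RN x t v > 0" using p1 by blast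
      then have "RN x t v = 0" using fRN[OF tT, of v] by simp
      then show ?thesis using Wp by simp
    qed
  qed
  show ?thesis using g_nn G2 G3 G4 G5 G6 by blast
qed


lemma ev_cond: "(P \<Longrightarrow> 0 < c) \<Longrightarrow> eventually (\<lambda>\<epsilon>::real. P \<longrightarrow> \<epsilon> * a \<le> c) (at_right 0)"
  by (cases P) (auto intro: ev_small)

lemma improve:
  fixes \<theta> :: real
  assumes tT: "Suc \<tau> < T"
    and gnn: "\<And>y. g y \<ge> 0" and gpos: "(\<Sum>y\<in>UNIV. g y) > 0"
    and gx: "\<And>y. g y > 0 \<Longrightarrow> x (Suc \<tau>) y > 0"
    and ngi: "ng g i \<ge> -1" and ngv: "\<And>v. v \<noteq> i \<Longrightarrow> ng g v \<ge> 0"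
    and ngz: "\<And>v. ng g v > 0 \<Longrightarrow> RN x (Suc \<tau>) v = 0 \<and> W x u (Suc (Suc \<tau>)) v > 0"
    and mode: "(W x u (Suc \<tau>) i > 0 \<and> \<theta> = 0) \<or> (\<theta> = 1 \<and> u (Suc \<tau>) i > 0 \<and> Bcum u \<tau> < F \<tau>)"
  shows "\<exists>x' u'. feas x' u' \<and> cost x' u' < cost x u"
proof -
  let ?t = "Suc \<tau>"
  have tau: "\<tau> < T" using tT by simp
  have Rpos: "R x \<tau> y > 0" if "g y > 0" for y
  proof -
    have "Xb x ?t y - x ?t y \<ge> 0" using fR[OF tT, of y] Xb_minus[of x ?t y] by simp
    then have "\<alpha> * R x \<tau> y > 0" using gx[OF that] Xb_Suc[of x \<tau> y] by simp
    then show ?thesis using alph by (simp add: zero_less_mult_iff)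
  qed
  have e1: "eventually (\<lambda>\<epsilon>. \<forall>y. (g y > 0 \<longrightarrow> \<epsilon> * g y \<le> R x \<tau> y) \<and> (g y > 0 \<longrightarrow> \<epsilon> * (\<alpha> * g y) \<le> x ?t y)) (at_right 0)"
    by (intro eventually_all_finite eventually_conj ev_cond Rpos gx)
  have e2: "eventually (\<lambda>\<epsilon>. \<forall>v. ng g v > 0 \<longrightarrow> \<epsilon> * ((\<alpha> - 1) * ng g v) \<le> W x u (Suc ?t) v) (at_right 0)"
    by (intro eventually_all_finite ev_cond) (use ngz in blast)
  have e3: "eventually (\<lambda>\<epsilon>. \<theta> = 0 \<longrightarrow> \<epsilon> * (- ng g i) \<le> W x u (Suc \<tau>) i) (at_right 0)"
    by (rule ev_cond) (metis mode zero_neq_one)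
  have e4: "eventually (\<lambda>\<epsilon>. \<theta> = 1 \<longrightarrow> \<epsilon> * 1 \<le> u ?t i) (at_right 0)"
    by (rule ev_cond) (use mode in auto)
  have e5: "eventually (\<lambda>\<epsilon>. \<theta> = 1 \<longrightarrow> \<epsilon> * 1 \<le> F \<tau> - Bcum u \<tau>) (at_right 0)"
    by (rule ev_cond) (use mode in auto)
  obtain \<epsilon> where ep: "\<epsilon> > 0"
    and E1: "\<forall>y. (g y > 0 \<longrightarrow> \<epsilon> * g y \<le> R x \<tau> y) \<and> (g y > 0 \<longrightarrow> \<epsilon> * (\<alpha> * g y) \<le> x ?t y)"
    and E2: "\<forall>v. ng g v > 0 \<longrightarrow> \<epsilon> * ((\<alpha> - 1) * ng g v) \<le> W x u (Suc ?t) v"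
    and E3: "\<theta> = 0 \<longrightarrow> \<epsilon> * (- ng g i) \<le> W x u (Suc \<tau>) i"
    and E4: "\<theta> = 1 \<longrightarrow> \<epsilon> * 1 \<le> u ?t i"
    and E5: "\<theta> = 1 \<longrightarrow> \<epsilon> * 1 \<le> F \<tau> - Bcum u \<tau>"
    using obtain_eps[OF eventually_conj[OF e1 eventually_conj[OF e2 eventually_conj[OF e3 eventually_conj[OF e4 e5]]]]]
    by blast
  have th: "\<theta> = 0 \<or> \<theta> = 1" using mode by auto
  have "feas (pertx x \<tau> \<epsilon> g) (pertu u \<tau> i (\<theta> * \<epsilon>)) \<and> cost (pertx x \<tau> \<epsilon> g) (pertu u \<tau> i (\<theta> * \<epsilon>)) < cost x u"
  proof (rule perturb[OF tau ep])
    show "0 \<le> \<theta> * \<epsilon>" using th ep by auto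
    show "\<And>y. 0 \<le> g y" by (rule gnn)
    show "0 < (\<Sum>y\<in>UNIV. g y)" by (rule gpos)
    show "\<epsilon> * g y \<le> R x \<tau> y" for y
      using E1 gnn[of y] fR[OF tau, of y] by (cases "g y > 0") auto
    show "\<alpha> * \<epsilon> * g y \<le> x (Suc \<tau>) y" for y
      using E1 gnn[of y] fx[OF tT, of y] by (cases "g y > 0") (auto simp: algebra_simps)
    show "0 < \<theta> * \<epsilon> \<Longrightarrow> Suc \<tau> < T \<and> \<theta> * \<epsilon> \<le> u (Suc \<tau>) i \<and> Bcum u \<tau> + \<theta> * \<epsilon> \<le> F \<tau>"
      using th E4 E5 tT by auto
    show "0 \<le> W x u (Suc \<tau>) v + (if v = i then \<theta> * \<epsilon> else 0) + \<epsilon> * ng g v" for v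
    proof (cases "v = i")
      case False
      then show ?thesis using ngv[OF False] fW[OF tau, of v] ep by simp
    next
      case True
      show ?thesis
      proof (cases "\<theta> = 0")
        case True
        then show ?thesis using E3 \<open>v = i\<close> by simp
      next
        case False
        then have "\<theta> = 1" using th by simp
        have "\<epsilon> * ng g i \<ge> \<epsilon> * (-1)" using ngi ep by (intro mult_left_mono) auto
        then show ?thesis using \<open>\<theta> = 1\<close> \<open>v = i\<close> fW[OF tau, of i] by simp
      qed
    qed
    show "0 \<le> W x u r v - (\<alpha> - 1) * \<epsilon> * ng g v" if r: "Suc (Suc \<tau>) \<le> r" "r \<le> T" for v r
    proof (cases "ng g v > 0")
      case True
      have "W x u (Suc ?t) v \<le> W x u r v"
        using persist(2)[OF tT conjunct1[OF ngz[OF True]]] r by simp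
      then show ?thesis using E2 True by (auto simp: algebra_simps)
    next
      case False
      have "(\<alpha> - 1) * \<epsilon> * ng g v \<le> 0"
        using False alph ep by (intro mult_nonneg_nonpos) auto
      then show ?thesis using fW'[OF r(2), of v] by simp
    qed
  qed
  then show ?thesis by blast
qed

end


lemma opt_noimp:
  assumes "opt x u" shows "feas x u" and "\<not> (\<exists>x' u'. feas x' u' \<and> cost x' u' < cost x u)"
  using assms unfolding opt_def by force+

lemma noviol:
  assumes op: "opt x u"
  shows "\<forall>t<T. \<forall>v. \<not> (RN x t v > 0 \<and> W x u (Suc t) v > 0)"
proof (rule ccontr)
  have fe: "feas x u" and ni: "\<not> (\<exists>x' u'. feas x' u' \<and> cost x' u' < cost x u)"
    using opt_noimp[OF op] by auto
  assume neg: "\<not> (\<forall>t<T. \<forall>v. \<not> (RN x t v > 0 \<and> W x u (Suc t) v > 0))"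
  define V where "V = {t. t < T \<and> (\<exists>v. RN x t v > 0 \<and> W x u (Suc t) v > 0)}"
  have Vne: "V \<noteq> {}" using neg unfolding V_def by auto
  have Vfin: "finite V" unfolding V_def by (rule finite_subset[of _ "{..<T}"]) auto
  define \<tau> where "\<tau> = Max V"
  have "\<tau> \<in> V" unfolding \<tau>_def using Max_in[OF Vfin Vne] .
  then obtain i where tau: "\<tau> < T" and Ri: "RN x \<tau> i > 0" and Wi: "W x u (Suc \<tau>) i > 0"
    unfolding V_def by auto
  have maxV: "t \<le> \<tau>" if "t \<in> V" for t unfolding \<tau>_def using Max_ge[OF Vfin that] .
  show False
  proof (cases "Suc \<tau> < T")
    case True
    let ?t = "Suc \<tau>"
    have p1: "\<not> (RN x ?t v > 0 \<and> W x u (Suc ?t) v > 0)" for v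
      using maxV[of ?t] True unfolding V_def by auto
    have mi: "out x ?t i = min (pbN x ?t i) (W x u ?t i + cvec e u ?t i + inn x ?t i)"
      using min_iff[OF fe True, of i] p1 by simp
    have "pbN x ?t i > 0" using pbN_Suc[of x \<tau> i] Ri alph by simp
    moreover have "W x u ?t i + cvec e u ?t i + inn x ?t i > 0"
      using Wi fc[OF fe True, of i] finn[OF fe True, of i] by simp
    ultimately have ipos: "out x ?t i > 0" using mi by simp
    have ialt: "(RN x ?t i = 0 \<and> W x u (Suc ?t) i > 0) \<or> inn x ?t i < out x ?t i"
    proof (cases "W x u (Suc ?t) i > 0")
      case True
      then show ?thesis using p1[of i] fRN[OF fe \<open>?t < T\<close>, of i] by auto
    next
      case False
      then have "W x u (Suc ?t) i = 0" using fW[OF fe \<open>?t < T\<close>, of i] by simp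
      then show ?thesis using W_Suc[of x u ?t i] Wi fc[OF fe True, of i] by simp
    qed
    obtain g where g: "\<forall>y. g y \<ge> 0" "(\<Sum>y\<in>UNIV. g y) > 0" "\<forall>y. g y > 0 \<longrightarrow> x ?t y > 0"
      "ng g i \<ge> -1" "\<forall>v. v \<noteq> i \<longrightarrow> ng g v \<ge> 0"
      "\<forall>v. ng g v > 0 \<longrightarrow> RN x ?t v = 0 \<and> W x u (Suc ?t) v > 0"
      using flow[OF fe True p1 ipos ialt] by blast
    have "\<exists>x' u'. feas x' u' \<and> cost x' u' < cost x u"
      by (rule improve[OF fe True, of g i 0]) (use g Wi in auto)
    then show False using ni by blast
  next
    case False
    obtain y0 where y0: "own y0 = i" "R x \<tau> y0 > 0"
    proof -
      have "\<exists>y\<in>{y. own y = i}. R x \<tau> y > 0"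
      proof (rule ccontr)
        assume "\<not> ?thesis"
        then have "RN x \<tau> i \<le> 0" unfolding RN_def by (intro sum_nonpos) auto
        then show False using Ri by simp
      qed
      then show ?thesis using that by auto
    qed
    define g where "g y = (if y = y0 then 1 else (0::real))" for y
    define \<epsilon> where "\<epsilon> = min (R x \<tau> y0) (W x u (Suc \<tau>) i)"
    have ep: "\<epsilon> > 0" unfolding \<epsilon>_def using y0 Wi by simp
    have ngv: "ng g v = rcv y0 v - (if own y0 = v then 1 else 0)" for v
    proof -
      have "(\<Sum>y\<in>UNIV. rcv y v * g y) = rcv y0 v" unfolding g_def by (simp add: if_distrib cong: if_cong)
      moreover have "(\<Sum>y\<in>{y. own y = v}. g y) = (if own y0 = v then 1 else 0)"
        unfolding g_def by (simp add: sum.delta)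
      ultimately show ?thesis unfolding ng_def by simp
    qed
    have "feas (pertx x \<tau> \<epsilon> g) (pertu u \<tau> i 0) \<and> cost (pertx x \<tau> \<epsilon> g) (pertu u \<tau> i 0) < cost x u"
    proof (rule perturb[OF fe tau ep])
      show "\<And>y. 0 \<le> g y" unfolding g_def by simp
      show "0 < (\<Sum>y\<in>UNIV. g y)" unfolding g_def by simp
      show "\<epsilon> * g y \<le> R x \<tau> y" for y
        unfolding g_def \<epsilon>_def using fR[OF fe tau, of y] by auto
      show "\<alpha> * \<epsilon> * g y \<le> x (Suc \<tau>) y" if "Suc \<tau> < T" for y using that False by simp
      show "0 < (0::real) \<Longrightarrow> Suc \<tau> < T \<and> 0 \<le> u (Suc \<tau>) i \<and> Bcum u \<tau> + 0 \<le> F \<tau>" by simp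
      show "0 \<le> W x u (Suc \<tau>) v + (if v = i then 0 else 0) + \<epsilon> * ng g v" for v
      proof (cases "v = i")
        case True
        have "\<epsilon> * ng g v \<ge> \<epsilon> * (-1)" unfolding ngv using rcv_nn[of y0 v] ep by (intro mult_left_mono) auto
        moreover have "\<epsilon> \<le> W x u (Suc \<tau>) v" unfolding \<epsilon>_def True by simp
        ultimately show ?thesis by simp
      next
        case False
        then show ?thesis unfolding ngv using y0 rcv_nn[of y0 v] ep fW[OF fe tau, of v] by simp
      qed
      show "0 \<le> W x u r v - (\<alpha> - 1) * \<epsilon> * ng g v" if "Suc (Suc \<tau>) \<le> r" "r \<le> T" for v r
        using that False tau by simp
    qed simp
    then show False using ni by blast
  qed
qed

lemma G1:
  assumes op: "opt x u" and t: "t < T"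
  shows "out x t v = min (pbN x t v) (W x u t v + cvec e u t v + inn x t v)"
  using min_iff[OF opt_noimp(1)[OF op] t] noviol[OF op] t by blast

lemma G2:
  assumes op: "opt x u" and t: "t < T" and up: "u t i > 0"
  shows "W x u (Suc t) i = 0 \<and> (\<forall>s\<le>t. W x u s i = 0)"
proof -
  have fe: "feas x u" and ni: "\<not> (\<exists>x' u'. feas x' u' \<and> cost x' u' < cost x u)"
    using opt_noimp[OF op] by auto
  have nv: "\<And>t v. t < T \<Longrightarrow> \<not> (RN x t v > 0 \<and> W x u (Suc t) v > 0)" using noviol[OF op] by blast
  have W1: "W x u (Suc t) i = 0"
  proof (rule ccontr)
    assume "W x u (Suc t) i \<noteq> 0"
    then have Wp: "W x u (Suc t) i > 0" using fW[OF fe t, of i] by simp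
    then have "RN x t i = 0" using nv[OF t, of i] fRN[OF fe t, of i] by simp
    note ps = persist(2)[OF fe t this]
    define s where "s = min (u t i) (W x u (Suc t) i)"
    have "feas x (\<lambda>k v. u k v - (if k = t \<and> v = i then s else 0))
     \<and> cost x (\<lambda>k v. u k v - (if k = t \<and> v = i then s else 0)) < cost x u"
    proof (rule reduce_u[OF fe t])
      show "0 < s" unfolding s_def using up Wp by simp
      show "s \<le> u t i" unfolding s_def by simp
      show "s \<le> W x u r i" if "Suc t \<le> r" "r \<le> T" for r
        using ps[OF that] unfolding s_def by simp
    qed
    then show False using ni by blast
  qed
  moreover have "W x u s i = 0" if "s \<le> t" for s
  proof (rule ccontr)
    assume "W x u s i \<noteq> 0"
    then have Wp: "W x u s i > 0" using fW'[OF fe, of s i] that t by simp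
    then obtain s0 where s0: "s = Suc s0" by (cases s) auto
    have s0T: "s0 < T" using that t s0 by simp
    then have "RN x s0 i = 0" using nv[OF s0T, of i] fRN[OF fe s0T, of i] Wp s0 by simp
    then have "W x u (Suc s0) i \<le> W x u (Suc t) i" using persist(2)[OF fe s0T] that s0 t by simp
    then show False using W1 Wp s0 by simp
  qed
  ultimately show ?thesis by blast
qed

lemma G3:
  assumes op: "opt x u" and ts: "ts < T - 1" and B: "Bcum u ts < F ts" and tt: "ts < t" "t < T"
  shows "u t v = 0"
proof (rule ccontr)
  have fe: "feas x u" and ni: "\<not> (\<exists>x' u'. feas x' u' \<and> cost x' u' < cost x u)"
    using opt_noimp[OF op] by auto
  have nv: "\<And>t v. t < T \<Longrightarrow> \<not> (RN x t v > 0 \<and> W x u (Suc t) v > 0)" using noviol[OF op] by blast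
  assume "u t v \<noteq> 0"
  then have "u t v > 0" using fu[OF fe tt(2), of v] by simp
  define P where "P t \<longleftrightarrow> ts < t \<and> t < T \<and> (\<exists>v. u t v > 0)" for t
  have Pt: "P t" unfolding P_def using tt \<open>u t v > 0\<close> by auto
  define t0 where "t0 = (LEAST t. P t)"
  have Pt0: "P t0" unfolding t0_def by (rule LeastI[of P, OF Pt])
  have below: "\<not> P k" if "k < t0" for k using not_less_Least[OF that[unfolded t0_def]] unfolding t0_def .
  obtain i where t0: "ts < t0" "t0 < T" and ui: "u t0 i > 0" using Pt0 unfolding P_def by auto
  obtain \<tau> where tau: "t0 = Suc \<tau>" using t0 by (cases t0) auto
  have tsl: "ts \<le> \<tau>" using t0 tau by simp
  have zero: "(\<Sum>v\<in>UNIV. u k v) = 0" if "ts < k" "k \<le> \<tau>" for k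
  proof -
    have kT: "k < T" using that tau t0 by simp
    have "\<forall>v. u k v \<le> 0" using below[of k] that tau kT unfolding P_def by (auto simp: not_less)
    then have "\<forall>v. u k v = 0" using fu[OF fe kT] by (simp add: order_antisym)
    then show ?thesis by simp
  qed
  have Beq: "Bcum u (ts + d) = Bcum u ts" if "ts + d \<le> \<tau>" for d
    using that
  proof (induction d)
    case 0 then show ?case by simp
  next
    case (Suc d)
    have "Bcum u (ts + Suc d) = Bcum u (ts + d) + (\<Sum>v\<in>UNIV. u (Suc (ts + d)) v)"
      unfolding Bcum_def by simp
    also have "\<dots> = Bcum u ts" using Suc zero[of "Suc (ts + d)"] by simp
    finally show ?case .
  qed
  have "Bcum u \<tau> = Bcum u ts" using Beq[of "\<tau> - ts"] tsl by simp
  moreover have "F ts \<le> F \<tau>" using F_mono[OF tsl] tau t0 by simp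
  ultimately have Bt: "Bcum u \<tau> < F \<tau>" using B by simp
  have W0: "W x u (Suc t0) i = 0" using G2[OF op t0(2) ui] by simp
  have T1: "Suc \<tau> < T" using t0 tau by simp
  have p1: "\<not> (RN x (Suc \<tau>) v > 0 \<and> W x u (Suc (Suc \<tau>)) v > 0)" for v using nv[OF T1] .
  have "inn x t0 i < out x t0 i"
    using W_Suc[of x u t0 i] W0 fW'[OF fe, of t0 i] t0 ui e_nn[OF t0(2), of i] unfolding cvec_def by simp
  moreover then have "out x t0 i > 0" using finn[OF fe t0(2), of i] by simp
  ultimately have ialt: "(RN x (Suc \<tau>) i = 0 \<and> W x u (Suc (Suc \<tau>)) i > 0) \<or> inn x (Suc \<tau>) i < out x (Suc \<tau>) i"
    and ipos: "out x (Suc \<tau>) i > 0" using tau by auto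
  obtain g where g: "\<forall>y. g y \<ge> 0" "(\<Sum>y\<in>UNIV. g y) > 0" "\<forall>y. g y > 0 \<longrightarrow> x (Suc \<tau>) y > 0"
    "ng g i \<ge> -1" "\<forall>v. v \<noteq> i \<longrightarrow> ng g v \<ge> 0"
    "\<forall>v. ng g v > 0 \<longrightarrow> RN x (Suc \<tau>) v = 0 \<and> W x u (Suc (Suc \<tau>)) v > 0"
    using flow[OF fe T1 p1 ipos ialt] by blast
  have "\<exists>x' u'. feas x' u' \<and> cost x' u' < cost x u"
    by (rule improve[OF fe T1, of g i 1]) (use g ui tau Bt in auto)
  then show False using ni by blast
qed

end




lemma (in gen) cap0:
  assumes fe: "feas x u" and t: "t < T" and c: "cap y = 0"
  shows "x t y = 0"
proof -
  have "R x t y \<ge> 0" using fR[OF fe t] .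
  then have le: "(\<Sum>k\<le>t. \<alpha>^(t-k) * x k y) \<le> 0" unfolding R_def c by simp
  have nn: "\<forall>k\<in>{..t}. 0 \<le> \<alpha>^(t-k) * x k y"
    using alph fx[OF fe] t by (auto intro!: mult_nonneg_nonneg)
  then have "(\<Sum>k\<le>t. \<alpha>^(t-k) * x k y) = 0" using le sum_nonneg[of "{..t}"] by (meson order_antisym)
  then have "\<forall>k\<in>{..t}. \<alpha>^(t-k) * x k y = 0" using nn by (subst (asm) sum_nonneg_eq_0_iff) auto
  then show ?thesis by (metis atMost_iff diff_self_eq_0 le_refl mult_cancel_right1 power_0)
qed

lemma sum_pair_fst: "(\<Sum>y\<in>{y::'a::finite\<times>'b::finite. fst y = v}. f y) = (\<Sum>j\<in>UNIV. f (v,j))"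
  by (rule sum.reindex_cong[of "Pair v"]) (auto simp: inj_on_def)

lemma sum_pair_all: "(\<Sum>y\<in>(UNIV::('a::finite\<times>'b::finite) set). f y) = (\<Sum>i\<in>UNIV. \<Sum>j\<in>UNIV. f (i,j))"
  by (simp add: sum.cartesian_product UNIV_Times_UNIV[symmetric] del: UNIV_Times_UNIV)

lemma free_part:
  fixes \<alpha> \<eta> \<gamma> :: real
    and Pb :: "'n::finite \<Rightarrow> 'n \<Rightarrow> real"
    and e :: "nat \<Rightarrow> 'n \<Rightarrow> real"
    and F :: "nat \<Rightarrow> real"
    and T :: nat
  assumes "0 \<le> \<eta>" and "\<eta> < 1" and "\<gamma> > 0" and "\<alpha> \<ge> 1"
    and "\<forall>i j. Pb i j \<ge> 0" and Pbd: "\<forall>i. Pb i i = 0"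
    and "\<forall>t<T. \<forall>i. e t i \<ge> 0"
    and "\<forall>s t. s \<le> t \<and> t < T \<longrightarrow> F s \<le> F t"
    and op: "free_optimal \<alpha> \<eta> \<gamma> Pb e F T P u"
  shows "optimal_properties e F T P (\<lambda>t. rowsum (Pbar_seq \<alpha> Pb P t)) u"
proof -
  interpret G: gen \<alpha> \<eta> \<gamma> "fst :: 'n\<times>'n \<Rightarrow> 'n" "\<lambda>y v. if snd y = v then 1 else 0"
    "\<lambda>y. Pb (fst y) (snd y)" e F T
    by unfold_locales (use assms in auto)
  define cv where "cv P' = (\<lambda>t (y::'n\<times>'n). P' t (fst y) (snd y) :: real)" for P' :: "nat \<Rightarrow> 'n \<Rightarrow> 'n \<Rightarrow> real"
  have out_eq: "G.out (cv P') t v = rowsum (P' t) v" for P' t v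
    unfolding G.out_def cv_def rowsum_def by (simp add: sum_pair_fst)
  have inn_eq: "G.inn (cv P') t v = (\<Sum>j\<in>UNIV. P' t j v)" for P' t v
  proof -
    have "G.inn (cv P') t v = (\<Sum>i\<in>UNIV. \<Sum>j\<in>UNIV. (if j = v then P' t i j else 0))"
      unfolding G.inn_def cv_def sum_pair_all by (intro sum.cong) auto
    then show ?thesis by (simp add: sum.delta')
  qed
  have W_eq: "G.W (cv P') u' t v = wseq (cvec e u') P' t v" for P' u' t v
    by (induction t) (simp_all add: G.W_Suc out_eq inn_eq rowsum_def)
  have Wc_eq: "Cum e u' t i + (\<Sum>k\<le>t. (\<Sum>j\<in>UNIV. P' k j i) - (\<Sum>j\<in>UNIV. P' k i j)) = G.W (cv P') u' (Suc t) i"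
    for P' u' t i
    unfolding G.W_def Cum_def lessThan_Suc_atMost inn_eq out_eq rowsum_def
    by (simp add: sum.distrib[symmetric] add_diff_eq)
  have Xb_eq: "Pbar_seq \<alpha> Pb P' t i j = G.Xb (cv P') t (i,j)" for P' t i j
  proof (induction t arbitrary: i j)
    case 0 then show ?case unfolding G.Xb_def by simp
  next
    case (Suc t)
    have "Pbar_seq \<alpha> Pb P' (Suc t) i j = \<alpha> * (G.Xb (cv P') t (i,j) - cv P' t (i,j))"
      using Suc by (simp add: cv_def)
    then show ?case by (simp add: G.Xb_minus G.Xb_Suc)
  qed
  have feas_eq: "free_feasible \<alpha> Pb e F T P' u' \<longleftrightarrow> G.feas (cv P') u'" for P' u'
    unfolding free_feasible_def G.feas_def G.R_def Wc_eq
    by (auto simp: cv_def)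
  have cost_eq: "free_cost \<alpha> \<eta> \<gamma> Pb T P' u' = G.cost (cv P') u'" for P' u'
    unfolding free_cost_def G.cost_def
    by (simp add: Xb_eq sum_pair_all G.Xb_minus[symmetric] cv_def)
  have inv: "cv (\<lambda>t a b. x' t (a,b)) = x'" for x' unfolding cv_def by auto
  have Gop: "G.opt (cv P) u"
    unfolding G.opt_def
  proof (intro conjI allI impI)
    show "G.feas (cv P) u" using op unfolding free_optimal_def feas_eq by simp
    fix x' u' assume "G.feas x' u'"
    then have "free_feasible \<alpha> Pb e F T (\<lambda>t a b. x' t (a,b)) u'" unfolding feas_eq inv .
    then have "free_cost \<alpha> \<eta> \<gamma> Pb T P u \<le> free_cost \<alpha> \<eta> \<gamma> Pb T (\<lambda>t a b. x' t (a,b)) u'"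
      using op unfolding free_optimal_def by blast
    then show "G.cost (cv P) u \<le> G.cost x' u'" unfolding cost_eq inv .
  qed
  have fe: "G.feas (cv P) u" using Gop unfolding G.opt_def by simp
  have Pii: "P t i i = 0" if "t < T" for t i
    using G.cap0[OF fe that, of "(i,i)"] Pbd by (simp add: cv_def)
  have A: "rowsum (P t) i = min (rowsum (Pbar_seq \<alpha> Pb P t) i)
          (wseq (cvec e u) P t i + cvec e u t i + (\<Sum>j\<in>UNIV - {i}. P t j i))" if t: "t < T" for i t
  proof -
    have pb: "rowsum (Pbar_seq \<alpha> Pb P t) i = G.pbN (cv P) t i"
      unfolding G.pbN_def rowsum_def by (simp add: sum_pair_fst Xb_eq)
    have s: "(\<Sum>j\<in>UNIV - {i}. P t j i) = G.inn (cv P) t i"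
      unfolding inn_eq using Pii[OF t, of i] by (simp add: sum_diff1)
    show ?thesis
      using G.G1[OF Gop t, of i, unfolded W_eq out_eq] unfolding pb s .
  qed
  have B: "wseq (cvec e u) P (Suc t) i = 0 \<and> (\<forall>s\<le>t. wseq (cvec e u) P s i = 0)"
    if t: "t < T" and "0 < u t i" for i t
    using G.G2[OF Gop t that(2)] unfolding W_eq by blast
  have C: "u t i = 0" if "ts < T - 1 \<and> Bcum u ts < F ts" "ts < t \<and> t < T" for ts t i
    using G.G3[OF Gop] that by blast
  show ?thesis unfolding optimal_properties_def using A B C by blast
qed


lemma prorata_nn: "\<forall>i j. Pb i j \<ge> 0 \<Longrightarrow> prorata_A Pb i j \<ge> (0::real)"
  unfolding prorata_A_def rowsum_def by (auto intro!: divide_nonneg_pos)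

lemma prorata_rowsum: "\<forall>i j. Pb i j \<ge> 0 \<Longrightarrow> rowsum (prorata_A Pb) i = (1::real)"
proof -
  assume nn: "\<forall>i j. Pb i j \<ge> 0"
  have rs: "rowsum Pb i \<ge> 0" unfolding rowsum_def using nn by (auto intro: sum_nonneg)
  show ?thesis
  proof (cases "rowsum Pb i > 0")
    case True
    then have "rowsum (prorata_A Pb) i = (\<Sum>j\<in>UNIV. Pb i j / rowsum Pb i)"
      unfolding rowsum_def[of "prorata_A Pb"] prorata_A_def by simp
    also have "\<dots> = rowsum Pb i / rowsum Pb i" unfolding rowsum_def by (rule sum_divide_distrib[symmetric])
    finally show ?thesis using True by simp
  next
    case False
    then have "rowsum Pb i = 0" using rs by simp
    then have "rowsum (prorata_A Pb) i = (\<Sum>j\<in>UNIV. if i = j then 1 else 0)"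
      unfolding rowsum_def[of "prorata_A Pb"] prorata_A_def by simp
    then show ?thesis by simp
  qed
qed

lemma pr_part:
  fixes \<alpha> \<eta> \<gamma> :: real
    and Pb :: "'n::finite \<Rightarrow> 'n \<Rightarrow> real"
    and e :: "nat \<Rightarrow> 'n \<Rightarrow> real"
    and F :: "nat \<Rightarrow> real"
    and T :: nat
  assumes "0 \<le> \<eta>" and "\<eta> < 1" and "\<gamma> > 0" and "\<alpha> \<ge> 1"
    and Pnn: "\<forall>i j. Pb i j \<ge> 0" and Pbd: "\<forall>i. Pb i i = 0"
    and "\<forall>t<T. \<forall>i. e t i \<ge> 0"
    and "\<forall>s t. s \<le> t \<and> t < T \<longrightarrow> F s \<le> F t"
    and op: "pr_optimal \<alpha> \<eta> \<gamma> Pb e F T p u"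
  shows "optimal_properties e F T (\<lambda>t i j. p t i * prorata_A Pb i j) (pbar_seq \<alpha> (rowsum Pb) p) u"
proof -
  interpret G: gen \<alpha> \<eta> \<gamma> "\<lambda>a::'n. a" "prorata_A Pb" "rowsum Pb" e F T
    by unfold_locales (use assms prorata_nn[OF Pnn] in auto)
  let ?A = "prorata_A Pb"
  have out_eq: "G.out p' t v = p' t v" for p' t v unfolding G.out_def by simp
  have inn_eq: "G.inn p' t v = (\<Sum>j\<in>UNIV. ?A j v * p' t j)" for p' t v unfolding G.inn_def by simp
  have Wc_eq: "Cum e u' t i + (\<Sum>k\<le>t. (\<Sum>j\<in>UNIV. ?A j i * p' k j) - p' k i) = G.W p' u' (Suc t) i"
    for p' u' t i
    unfolding G.W_def Cum_def lessThan_Suc_atMost inn_eq out_eq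
    by (simp add: sum.distrib[symmetric] add_diff_eq)
  have Xb_eq: "pbar_seq \<alpha> (rowsum Pb) p' t i = G.Xb p' t i" for p' t i
  proof (induction t arbitrary: i)
    case 0 then show ?case unfolding G.Xb_def by simp
  next
    case (Suc t)
    have "pbar_seq \<alpha> (rowsum Pb) p' (Suc t) i = \<alpha> * (G.Xb p' t i - p' t i)"
      using Suc by simp
    then show ?case by (simp add: G.Xb_minus G.Xb_Suc)
  qed
  have feas_eq: "pr_feasible \<alpha> Pb e F T p' u' \<longleftrightarrow> G.feas p' u'" for p' u'
    unfolding pr_feasible_def G.feas_def G.R_def Wc_eq by auto
  have cost_eq: "pr_cost \<alpha> \<eta> \<gamma> Pb T p' u' = G.cost p' u'" for p' u'
    unfolding pr_cost_def G.cost_def by (simp add: Xb_eq G.Xb_minus[symmetric])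
  have Gop: "G.opt p u"
    using op unfolding G.opt_def pr_optimal_def feas_eq cost_eq .
  have fe: "G.feas p u" using Gop unfolding G.opt_def by simp
  have pA: "p t i * ?A i i = 0" if "t < T" for t i
  proof (cases "rowsum Pb i > 0")
    case True then show ?thesis unfolding prorata_A_def using Pbd by simp
  next
    case False
    have "rowsum Pb i \<ge> 0" unfolding rowsum_def using Pnn by (auto intro: sum_nonneg)
    then have "rowsum Pb i = 0" using False by simp
    then show ?thesis using G.cap0[OF fe that, of i] by simp
  qed
  have rs: "rowsum (\<lambda>i j. p t i * ?A i j) i = p t i" for t i
    using prorata_rowsum[OF Pnn, of i] unfolding rowsum_def by (simp add: sum_distrib_left[symmetric])
  have W_eq: "G.W p u' t v = wseq (cvec e u') (\<lambda>t i j. p t i * ?A i j) t v" for u' t v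
  proof (induction t)
    case 0 then show ?case unfolding G.W_def by simp
  next
    case (Suc t)
    have "(\<Sum>j\<in>UNIV. p t v * ?A v j) = p t v" using rs[of t v] unfolding rowsum_def .
    then show ?case using Suc by (simp add: G.W_Suc out_eq inn_eq mult.commute)
  qed
  have A: "rowsum ((\<lambda>t i j. p t i * ?A i j) t) i = min (pbar_seq \<alpha> (rowsum Pb) p t i)
          (wseq (cvec e u) (\<lambda>t i j. p t i * ?A i j) t i + cvec e u t i + (\<Sum>j\<in>UNIV - {i}. p t j * ?A j i))"
    if t: "t < T" for i t
  proof -
    have pb: "pbar_seq \<alpha> (rowsum Pb) p t i = G.pbN p t i"
      unfolding G.pbN_def by (simp add: Xb_eq)
    have s: "(\<Sum>j\<in>UNIV - {i}. p t j * ?A j i) = G.inn p t i"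
      unfolding inn_eq using pA[OF t, of i] by (simp add: sum_diff1 mult.commute)
    have r: "rowsum ((\<lambda>t i j. p t i * ?A i j) t) i = G.out p t i" using rs out_eq by simp
    show ?thesis
      using G.G1[OF Gop t, of i, unfolded W_eq] unfolding pb s r .
  qed
  have B: "wseq (cvec e u) (\<lambda>t i j. p t i * ?A i j) (Suc t) i = 0
      \<and> (\<forall>s\<le>t. wseq (cvec e u) (\<lambda>t i j. p t i * ?A i j) s i = 0)"
    if t: "t < T" and "0 < u t i" for i t
    using G.G2[OF Gop t that(2)] unfolding W_eq by blast
  have C: "u t i = 0" if "ts < T - 1 \<and> Bcum u ts < F ts" "ts < t \<and> t < T" for ts t i
    using G.G3[OF Gop] that by blast
  show ?thesis unfolding optimal_properties_def using A B C by blast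
qed

theorem lemma1:
  fixes \<alpha> \<eta> \<gamma> :: real
    and Pb :: "'n::finite \<Rightarrow> 'n \<Rightarrow> real"
    and e :: "nat \<Rightarrow> 'n \<Rightarrow> real"
    and F :: "nat \<Rightarrow> real"
    and T :: nat
  assumes "0 \<le> \<eta>" and "\<eta> < 1" and "\<gamma> > 0" and "\<alpha> \<ge> 1"
    and "\<forall>i j. Pb i j \<ge> 0" and "\<forall>i. Pb i i = 0"
    and "\<forall>t<T. \<forall>i. e t i \<ge> 0"
    and "\<forall>t<T. F t \<ge> 0"
    and "\<forall>s t. s \<le> t \<and> t < T \<longrightarrow> F s \<le> F t"
  shows "(\<forall>P u. free_optimal \<alpha> \<eta> \<gamma> Pb e F T P u \<longrightarrow>
            optimal_properties e F T P (\<lambda>t. rowsum (Pbar_seq \<alpha> Pb P t)) u)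
       \<and> (\<forall>p u. pr_optimal \<alpha> \<eta> \<gamma> Pb e F T p u \<longrightarrow>
            optimal_properties e F T (\<lambda>t i j. p t i * prorata_A Pb i j)
              (pbar_seq \<alpha> (rowsum Pb) p) u)"
  using free_part[OF assms(1-7) assms(9)] pr_part[OF assms(1-7) assms(9)] by blast


end
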